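(* Fix an integer $j\ge 0$. Define a function $\mathrm{suc}$ on triples of integers with $z\ge1$ recursively by \[\mathrm{suc}(x,y,1)=\{(2,y{+}1,1),(3,y{+}1,1),\ldots,(x{+}1,y{+}1,1)\}\cup\{(x,x{+}1,1),(x,x{+}2,1),\ldots,(x,y,1)\}\] (the second set being empty if $y\le x$), and for $z\geq 2$, \[\mathrm{suc}(x,y,z)=\{(2,y{+}1,z),(3,y{+}1,z),\ldots,(x{+}1,y{+}1,z)\}\cup \mathrm{suc}(x,y,z{-}1).\] Let $T$ be the rooted labeled tree whose root has label $(j{+}1,j{+}1,j{+}1)$ and in which a vertex with label $L$ has exactly one child with label $L'$ for each $L'\in \mathrm{suc}(L)$. Then $T$ is isomorphic as a rooted tree to $BT^j(1234)$.
   Context: $B_n$ is the group of permutations $w$ of $\{-n,\ldots,-1,1,\ldots,n\}$ with $w(-i)=-w(i)$; such $w$ is determined by $[w(-n),w(-n+1),\ldots,w(-1)]$. $w$ avoids $1234$ if there are no indices $-n\le a<b<c<d\le n$ (nonzero) with $w(a)<w(b)<w(c)<w(d)$. $B_n^j(1234)$ is the set of $1234$-avoiding $w\in B_n$ with $w(i)>0$ for exactly $j$ indices $i\in\{1,\ldots,n\}$. For $\ell\ge1$ let $\beta_\ell(x)=x$ if $|x|<\ell$, $\beta_\ell(x)=x-1$ if $x<-\ell$, $\beta_\ell(x)=x+1$ if $x>\ell$. For $w\in B_n$, $1\le i\le n+1$ and $1\le \ell\le n+1$, let $w^{-i}_\ell\in B_{n+1}$ be defined by $w^{-i}_\ell(-k)=\beta_\ell(w(-k+1))$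 for $i+1\le k\le n+1$, $w^{-i}_\ell(-i)=\ell$, $w^{-i}_\ell(-k)=\beta_\ell(w(-k))$ for $1\le k\le i-1$, extended by $w^{-i}_\ell(k)=-w^{-i}_\ell(-k)$. The tree $BT^j(1234)$ is the rooted tree whose vertices are signed permutations, with root the element $[-1,-2,\ldots,-j]$ of $B_j$ (i.e. $w(-k)=-(j+1-k)$ for $1\le k\le j$), and in which the children of a vertex $w\in B_n^j(1234)$ are all $w^{-i}_\ell$ with $1\le i\le n+1$ and $m<\ell\le n+1$ that avoid $1234$, where $m=\max(\{w(-k):1\le k\le n\}\cup\{0\})$. *)

theory Defs
  imports Main
begin

text \<open>Vertices are the root-paths [r, v1, ..., vk] with v(i+1) a child label of v(i);
  a vertex with label L has exactly one child for each element of the children set of L.\<close>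

definition gen_tree :: "'a \<Rightarrow> ('a \<Rightarrow> 'a set) \<Rightarrow> 'a list set" where
  "gen_tree r C = {p. p \<noteq> [] \<and> hd p = r \<and> (\<forall>i. Suc i < length p \<longrightarrow> p ! Suc i \<in> C (p ! i))}"

definition tree_child :: "'a list set \<Rightarrow> 'a list \<Rightarrow> 'a list \<Rightarrow> bool" where
  "tree_child V p q \<longleftrightarrow> p \<in> V \<and> q \<in> V \<and> (\<exists>x. q = p @ [x])"

definition rooted_tree_iso ::
  "'a list set \<Rightarrow> 'a list \<Rightarrow> 'b list set \<Rightarrow> 'b list \<Rightarrow> bool" where
  "rooted_tree_iso V1 r1 V2 r2 \<longleftrightarrow>
     (\<exists>f. bij_betw f V1 V2 \<and> f r1 = r2 \<and>
          (\<forall>p\<in>V1. \<forall>q\<in>V1. tree_child V1 p q \<longleftrightarrow> tree_child V2 (f p) (f q)))"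

fun suc_aux :: "int \<Rightarrow> int \<Rightarrow> nat \<Rightarrow> (int \<times> int \<times> int) set" where
  "suc_aux x y 0 = {}"
| "suc_aux x y (Suc 0) =
     {(k, y + 1, 1) | k. 2 \<le> k \<and> k \<le> x + 1} \<union> {(x, k, 1) | k. x + 1 \<le> k \<and> k \<le> y}"
| "suc_aux x y (Suc (Suc n)) =
     {(k, y + 1, int (Suc (Suc n))) | k. 2 \<le> k \<and> k \<le> x + 1} \<union> suc_aux x y (Suc n)"

definition suc_lab :: "int \<times> int \<times> int \<Rightarrow> (int \<times> int \<times> int) set" where
  "suc_lab L = (case L of (x, y, z) \<Rightarrow> if 1 \<le> z then suc_aux x y (nat z) else {})"

definition T_tree :: "nat \<Rightarrow> (int \<times> int \<times> int) list set" where
  "T_tree j = gen_tree (int j + 1, int j + 1, int j + 1) suc_lab"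

text \<open>An element of B_n is represented as a pair (n, w) with w :: int \<Rightarrow> int a bijection of
  {-n..n} - {0} satisfying w(-x) = -w(x), extended by the identity outside {-n..n}-{0}.\<close>

definition sdom :: "nat \<Rightarrow> int set" where
  "sdom n = {- int n .. int n} - {0}"

definition signed_perm :: "nat \<Rightarrow> (int \<Rightarrow> int) \<Rightarrow> bool" where
  "signed_perm n w \<longleftrightarrow> bij_betw w (sdom n) (sdom n) \<and> (\<forall>x. w (- x) = - w x)
     \<and> (\<forall>x. x \<notin> sdom n \<longrightarrow> w x = x)"

definition avoids_1234 :: "nat \<Rightarrow> (int \<Rightarrow> int) \<Rightarrow> bool" where
  "avoids_1234 n w \<longleftrightarrow> \<not> (\<exists>a b c d. a \<in> sdom n \<and> b \<in> sdom n \<and> c \<in> sdom n \<and> d \<in> sdom n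
      \<and> a < b \<and> b < c \<and> c < d \<and> w a < w b \<and> w b < w c \<and> w c < w d)"

definition in_Bj1234 :: "nat \<Rightarrow> nat \<Rightarrow> (int \<Rightarrow> int) \<Rightarrow> bool" where
  "in_Bj1234 j n w \<longleftrightarrow> signed_perm n w \<and> avoids_1234 n w
     \<and> card {i \<in> {1 .. int n}. w i > 0} = j"

definition beta :: "int \<Rightarrow> int \<Rightarrow> int" where
  "beta l x = (if \<bar>x\<bar> < l then x else if x < 0 then x - 1 else x + 1)"

text \<open>Values of w(-k) of the new permutation, for 1 \<le> k \<le> n+1.\<close>
definition ins_neg :: "(int \<Rightarrow> int) \<Rightarrow> int \<Rightarrow> int \<Rightarrow> int \<Rightarrow> int" where
  "ins_neg w i l k = (if i + 1 \<le> k then beta l (w (- k + 1))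
                      else if k = i then l else beta l (w (- k)))"

definition ins_perm :: "nat \<Rightarrow> (int \<Rightarrow> int) \<Rightarrow> int \<Rightarrow> int \<Rightarrow> nat \<times> (int \<Rightarrow> int)" where
  "ins_perm n w i l = (Suc n, (\<lambda>x. if - int (Suc n) \<le> x \<and> x < 0 then ins_neg w i l (- x)
                               else if 0 < x \<and> x \<le> int (Suc n) then - ins_neg w i l x
                               else x))"

definition max_neg :: "nat \<Rightarrow> (int \<Rightarrow> int) \<Rightarrow> int" where
  "max_neg n w = Max ({w (- k) | k. 1 \<le> k \<and> k \<le> int n} \<union> {0})"

definition BT_children :: "nat \<Rightarrow> nat \<times> (int \<Rightarrow> int) \<Rightarrow> (nat \<times> (int \<Rightarrow> int)) set" where
  "BT_children j v = (case v of (n, w) \<Rightarrow>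
     if in_Bj1234 j n w then
       {ins_perm n w i l | i l. 1 \<le> i \<and> i \<le> int n + 1 \<and> max_neg n w < l \<and> l \<le> int n + 1
                               \<and> avoids_1234 (Suc n) (snd (ins_perm n w i l))}
     else {})"

definition BT_root :: "nat \<Rightarrow> nat \<times> (int \<Rightarrow> int)" where
  "BT_root j = (j, (\<lambda>x. if - int j \<le> x \<and> x < 0 then - (int j + 1) - x
                      else if 0 < x \<and> x \<le> int j then int j + 1 - x else x))"

definition BT_tree :: "nat \<Rightarrow> (nat \<times> (int \<Rightarrow> int)) list set" where
  "BT_tree j = gen_tree (BT_root j) (BT_children j)"

end

theory Submission
  imports Defs
begin


lemma gen_tree_nth_P:
  assumes "p \<in> gen_tree r C" "P r" "\<And>v c. P v \<Longrightarrow> c \<in> C v \<Longrightarrow> P c"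
  shows "i < length p \<Longrightarrow> P (p ! i)"
proof (induction i)
  case 0
  then show ?case using assms(1,2) by (auto simp: gen_tree_def hd_conv_nth)
next
  case (Suc i)
  then have "p ! Suc i \<in> C (p ! i)" using assms(1) by (auto simp: gen_tree_def)
  then show ?case using Suc assms(3) by auto
qed

lemma gen_tree_snoc:
  "p @ [x] \<in> gen_tree r C \<longleftrightarrow> (p = [] \<and> x = r) \<or> (p \<in> gen_tree r C \<and> x \<in> C (last p))"
proof (cases "p = []")
  case True
  then show ?thesis by (auto simp: gen_tree_def)
next
  case False
  show ?thesis
  proof
    assume A: "p @ [x] \<in> gen_tree r C"
    have "p \<in> gen_tree r C" using A False unfolding gen_tree_def
      by (auto simp: nth_append) (metis Suc_lessD less_SucI nth_append)
    moreover have "x \<in> C (last p)" using A False unfolding gen_tree_def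
      apply (auto simp: nth_append)
      apply (drule spec[of _ "length p - 1"])
      by (simp add: last_conv_nth)
    ultimately show "(p = [] \<and> x = r) \<or> (p \<in> gen_tree r C \<and> x \<in> C (last p))" by simp
  next
    assume "(p = [] \<and> x = r) \<or> (p \<in> gen_tree r C \<and> x \<in> C (last p))"
    then have B: "p \<in> gen_tree r C" "x \<in> C (last p)" using False by auto
    show "p @ [x] \<in> gen_tree r C" unfolding gen_tree_def
    proof (intro CollectI conjI allI impI)
      show "hd (p @ [x]) = r" using B False by (simp add: gen_tree_def)
      fix i assume i: "Suc i < length (p @ [x])"
      show "(p @ [x]) ! Suc i \<in> C ((p @ [x]) ! i)"
      proof (cases "Suc i < length p")
        case True then show ?thesis using B by (simp add: gen_tree_def nth_append)
      next
        case F2: False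
        then have "Suc i = length p" using i by simp
        then have "i = length p - 1" by simp
        then show ?thesis using B False \<open>Suc i = length p\<close> by (simp add: nth_append last_conv_nth)
      qed
    qed simp
  qed
qed

lemma gen_tree_iso:
  assumes Pr: "P r2" and phr: "\<phi> r2 = r1"
    and Pc: "\<And>v c. P v \<Longrightarrow> c \<in> C2 v \<Longrightarrow> P c"
    and inj: "\<And>v. P v \<Longrightarrow> inj_on \<phi> (C2 v)"
    and img: "\<And>v. P v \<Longrightarrow> \<phi> ` C2 v = C1 (\<phi> v)"
  shows "rooted_tree_iso (gen_tree r1 C1) [r1] (gen_tree r2 C2) [r2]"
proof -
  let ?V1 = "gen_tree r1 C1" and ?V2 = "gen_tree r2 C2"
  let ?G = "map \<phi>"
  have PV: "P (p ! i)" if "p \<in> ?V2" "i < length p" for p i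
    by (rule gen_tree_nth_P[of p r2 C2 P]) (use that Pr Pc in auto)
  have into: "?G p \<in> ?V1" if p: "p \<in> ?V2" for p
  proof -
    have "p \<noteq> []" "hd p = r2" using p by (auto simp: gen_tree_def)
    moreover have "?G p ! Suc i \<in> C1 (?G p ! i)" if "Suc i < length p" for i
    proof -
      have "p ! Suc i \<in> C2 (p ! i)" using p that by (auto simp: gen_tree_def)
      then have "\<phi> (p ! Suc i) \<in> C1 (\<phi> (p ! i))" using img[OF PV[OF p, of i]] that by force
      then show ?thesis using that by simp
    qed
    ultimately show ?thesis using phr by (auto simp: gen_tree_def hd_map)
  qed
  have injG: "inj_on ?G ?V2"
  proof
    fix p q assume p: "p \<in> ?V2" and q: "q \<in> ?V2" and e: "?G p = ?G q"
    have len: "length p = length q" using e by (metis length_map)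
    have "i < length p \<Longrightarrow> p ! i = q ! i" for i
    proof (induction i)
      case 0 then show ?case using p q by (auto simp: gen_tree_def hd_conv_nth)
    next
      case (Suc i)
      have a: "p ! Suc i \<in> C2 (p ! i)" using p Suc by (auto simp: gen_tree_def)
      have b: "q ! Suc i \<in> C2 (p ! i)" using q Suc len by (auto simp: gen_tree_def)
      have "\<phi> (p ! Suc i) = \<phi> (q ! Suc i)" using e Suc len by (metis nth_map)
      then show ?case using inj[OF PV[OF p, of i]] a b Suc by (auto dest: inj_onD)
    qed
    then show "p = q" using len by (simp add: nth_equalityI)
  qed
  have surj: "\<forall>q. length q = k \<longrightarrow> q \<in> ?V1 \<longrightarrow> (\<exists>p\<in>?V2. ?G p = q)" for k
  proof (induction k)
    case 0 then show ?case by (auto simp: gen_tree_def)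
  next
    case (Suc k)
    show ?case
    proof (intro allI impI)
      fix q assume lq: "length q = Suc k" and q: "q \<in> ?V1"
      obtain q0 a where qa: "q = q0 @ [a]" using lq by (metis length_Suc_conv_rev)
      show "\<exists>p\<in>?V2. ?G p = q"
      proof (cases "q0 = []")
        case True
        then have "a = r1" using q qa by (auto simp: gen_tree_def)
        then show ?thesis using True qa phr by (intro bexI[of _ "[r2]"]) (auto simp: gen_tree_def)
      next
        case False
        then have q0: "q0 \<in> ?V1" and a: "a \<in> C1 (last q0)" using q qa gen_tree_snoc[of q0 a r1 C1] by auto
        obtain p0 where p0: "p0 \<in> ?V2" "?G p0 = q0" using Suc.IH lq qa q0 by auto
        have ne: "p0 \<noteq> []" using p0 by (auto simp: gen_tree_def)
        have lp: "last q0 = \<phi> (last p0)" using p0 ne by (metis last_map)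
        have "P (last p0)" using PV[OF p0(1)] ne by (simp add: last_conv_nth)
        then obtain c where c: "c \<in> C2 (last p0)" "\<phi> c = a" using img a lp by (metis imageE)
        have "p0 @ [c] \<in> ?V2" using gen_tree_snoc[of p0 c r2 C2] p0 c by auto
        then show ?thesis using p0 c qa by (intro bexI[of _ "p0 @ [c]"]) auto
      qed
    qed
  qed
  have bijG: "bij_betw ?G ?V2 ?V1"
    unfolding bij_betw_def using injG into surj by blast
  define f where "f = inv_into ?V2 ?G"
  have bijf: "bij_betw f ?V1 ?V2" unfolding f_def by (rule bij_betw_inv_into[OF bijG])
  have r2V: "[r2] \<in> ?V2" by (auto simp: gen_tree_def)
  have fr: "f [r1] = [r2]" unfolding f_def using inv_into_f_f[OF injG r2V] phr by simp
  have Gf: "?G (f q) = q" if "q \<in> ?V1" for q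
    unfolding f_def using bijG that by (simp add: bij_betw_def f_inv_into_f)
  have fV: "f q \<in> ?V2" if "q \<in> ?V1" for q using bijf that by (auto simp: bij_betw_def)
  have key: "(\<exists>x. q = p @ [x]) \<longleftrightarrow> (\<exists>x. f q = f p @ [x])" if p: "p \<in> ?V1" and q: "q \<in> ?V1" for p q
  proof
    assume "\<exists>x. q = p @ [x]"
    then obtain x where qx: "q = p @ [x]" by blast
    have "length (f q) = Suc (length (f p))" using Gf[OF p] Gf[OF q] qx by (metis length_map length_append_singleton)
    then obtain p' y where fq: "f q = p' @ [y]" by (metis length_Suc_conv_rev)
    have pne: "p \<noteq> []" using p by (auto simp: gen_tree_def)
    have "?G p' = p" using Gf[OF q] fq qx by simp
    then have "p' \<noteq> []" using pne by auto
    then have "p' \<in> ?V2" using fV[OF q] fq gen_tree_snoc[of p' y r2 C2] by auto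
    then have "p' = f p" using injG fV[OF p] Gf[OF p] \<open>?G p' = p\<close> by (auto dest: inj_onD)
    then show "\<exists>x. f q = f p @ [x]" using fq by blast
  next
    assume "\<exists>x. f q = f p @ [x]"
    then obtain x where "f q = f p @ [x]" by blast
    then have "?G (f q) = ?G (f p) @ [\<phi> x]" by simp
    then show "\<exists>x. q = p @ [x]" using Gf[OF p] Gf[OF q] by auto
  qed
  show ?thesis unfolding rooted_tree_iso_def tree_child_def
    using bijf fr key fV by (intro exI[of _ f]) blast
qed



lemma sdom_iff: "x \<in> sdom n \<longleftrightarrow> x \<noteq> 0 \<and> - int n \<le> x \<and> x \<le> int n"
  by (auto simp: sdom_def)

lemma finite_sdom[simp]: "finite (sdom n)" by (simp add: sdom_def)

lemma sp_odd: "signed_perm n w \<Longrightarrow> w (- x) = - w x"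
  by (simp add: signed_perm_def)
lemma sp_in: "signed_perm n w \<Longrightarrow> x \<in> sdom n \<Longrightarrow> w x \<in> sdom n"
  by (auto simp: signed_perm_def bij_betw_def)
lemma sp_inj: "signed_perm n w \<Longrightarrow> x \<in> sdom n \<Longrightarrow> y \<in> sdom n \<Longrightarrow> w x = w y \<Longrightarrow> x = y"
  by (auto simp: signed_perm_def bij_betw_def dest: inj_onD)
lemma sp_surj: "signed_perm n w \<Longrightarrow> y \<in> sdom n \<Longrightarrow> \<exists>x\<in>sdom n. w x = y"
  unfolding signed_perm_def bij_betw_def by (metis imageE)

lemma beta_less_iff: "beta l x < beta l y \<longleftrightarrow> x < y"
  by (auto simp: beta_def)
lemma beta_eq_iff: "beta l x = beta l y \<longleftrightarrow> x = y"
  by (auto simp: beta_def)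
lemma beta_odd: "1 \<le> l \<Longrightarrow> beta l (- x) = - beta l x"
  by (auto simp: beta_def)
lemma beta_abs_ne: "\<bar>beta l x\<bar> \<noteq> l"
  by (auto simp: beta_def)
lemma beta_pos_iff: "l \<ge> 1 \<Longrightarrow> 0 < beta l x \<longleftrightarrow> 0 < x"
  by (cases "x = 0") (auto simp: beta_def)
lemma beta_small: "\<bar>x\<bar> < l \<Longrightarrow> beta l x = x"
  by (auto simp: beta_def)

lemma max_neg_set: "{w (- k) | k. 1 \<le> k \<and> k \<le> int n} = (\<lambda>k. w (- k)) ` {1..int n}"
  by auto

lemma mn_ge: "1 \<le> k \<Longrightarrow> k \<le> int n \<Longrightarrow> w (- k) \<le> max_neg n w"
  unfolding max_neg_def max_neg_set by (rule Max_ge) auto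
lemma mn_nonneg: "0 \<le> max_neg n w"
  unfolding max_neg_def max_neg_set by (rule Max_ge) auto
lemma mn_eqI:
  assumes "\<And>k. 1 \<le> k \<Longrightarrow> k \<le> int n \<Longrightarrow> w (- k) \<le> M" "0 \<le> M"
    "M = 0 \<or> (\<exists>k. 1 \<le> k \<and> k \<le> int n \<and> w (- k) = M)"
  shows "max_neg n w = M"
  unfolding max_neg_def max_neg_set
  by (rule Max_eqI) (use assms in auto)
lemma mn_le: assumes "signed_perm n w" shows "max_neg n w \<le> int n"
proof -
  have "max_neg n w \<in> (\<lambda>k. w (- k)) ` {1..int n} \<union> {0}"
    unfolding max_neg_def max_neg_set by (rule Max_in) auto
  then show ?thesis using sp_in[OF assms] by (auto simp: sdom_iff)
qed

definition Inv :: "nat \<Rightarrow> (int \<Rightarrow> int) \<Rightarrow> bool" where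
  "Inv n w \<longleftrightarrow> (\<forall>p q. 1 \<le> p \<longrightarrow> p < q \<longrightarrow> q \<le> int n \<longrightarrow> w p < w q \<longrightarrow> w p \<le> max_neg n w)"

definition dec_from :: "nat \<Rightarrow> (int \<Rightarrow> int) \<Rightarrow> int \<Rightarrow> bool" where
  "dec_from n w i \<longleftrightarrow> (\<forall>a b. i \<le> a \<longrightarrow> a < b \<longrightarrow> b \<le> int n \<longrightarrow> w (- a) < w (- b))"

definition no123_from :: "nat \<Rightarrow> (int \<Rightarrow> int) \<Rightarrow> int \<Rightarrow> bool" where
  "no123_from n w i \<longleftrightarrow> \<not> (\<exists>a b c. i \<le> a \<and> a < b \<and> b < c \<and> c \<le> int n
       \<and> w (- c) < w (- b) \<and> w (- b) < w (- a))"

definition lab :: "nat \<Rightarrow> (int \<Rightarrow> int) \<Rightarrow> int \<times> int \<times> int" where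
  "lab n w = (int (card {i \<in> {1..int n + 1}. dec_from n w i}),
              int (card {i \<in> {1..int n + 1}. no123_from n w i}),
              int n + 1 - max_neg n w)"

lemma card_thr:
  fixes a b t :: int
  assumes "\<And>I. a \<le> I \<Longrightarrow> I \<le> b \<Longrightarrow> Q I \<longleftrightarrow> t \<le> I" "a \<le> t" "t \<le> b + 1"
  shows "int (card {I \<in> {a..b}. Q I}) = b + 1 - t"
proof -
  have "{I \<in> {a..b}. Q I} = {t..b}" using assms by auto
  then show ?thesis using assms by simp
qed

lemma thr_exists:
  fixes N :: int
  assumes up: "\<And>I J. 1 \<le> I \<Longrightarrow> I \<le> J \<Longrightarrow> J \<le> N \<Longrightarrow> Q I \<Longrightarrow> Q J" and top: "Q N" and N: "1 \<le> N"
  shows "\<exists>t. 1 \<le> t \<and> t \<le> N \<and> (\<forall>I. 1 \<le> I \<longrightarrow> I \<le> N \<longrightarrow> (Q I \<longleftrightarrow> t \<le> I))"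
proof -
  define S where "S = {I \<in> {1..N}. Q I}"
  have fin: "finite S" "S \<noteq> {}" using top N by (auto simp: S_def intro: finite_subset[of _ "{1..N}"])
  define t where "t = Min S"
  have tS: "t \<in> S" using fin by (simp add: t_def)
  have "\<forall>I. 1 \<le> I \<longrightarrow> I \<le> N \<longrightarrow> (Q I \<longleftrightarrow> t \<le> I)"
  proof (intro allI impI)
    fix I assume I: "1 \<le> I" "I \<le> N"
    show "Q I \<longleftrightarrow> t \<le> I"
    proof
      assume "Q I" then have "I \<in> S" using I by (simp add: S_def)
      then show "t \<le> I" using fin by (simp add: t_def)
    next
      assume "t \<le> I" then show "Q I" using tS up I by (auto simp: S_def)
    qed
  qed
  then show ?thesis using tS by (intro exI[of _ t]) (auto simp: S_def)
qed



locale node =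
  fixes j n :: nat and w :: "int \<Rightarrow> int"
  assumes inB: "in_Bj1234 j n w" and inv: "Inv n w"
begin
lemma sp: "signed_perm n w" using inB by (simp add: in_Bj1234_def)
lemma av: "avoids_1234 n w" using inB by (simp add: in_Bj1234_def)
lemma fh_le: "1 \<le> k \<Longrightarrow> k \<le> int n \<Longrightarrow> w (- k) \<le> max_neg n w" by (rule mn_ge)
lemma w_odd: "w (- x) = - w x" using sp by (rule sp_odd)
lemma w_in: "x \<in> sdom n \<Longrightarrow> w x \<in> sdom n" using sp by (rule sp_in)
lemma w_inj: "x \<in> sdom n \<Longrightarrow> y \<in> sdom n \<Longrightarrow> w x = w y \<Longrightarrow> x = y" using sp by (rule sp_inj)
lemma neg_le: "x \<in> sdom n \<Longrightarrow> x < 0 \<Longrightarrow> w x \<le> max_neg n w"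
  using fh_le[of "- x"] by (auto simp: sdom_iff)
lemma w_lt: "1 \<le> a \<Longrightarrow> a \<le> int n \<Longrightarrow> 1 \<le> b \<Longrightarrow> b \<le> int n \<Longrightarrow> a \<noteq> b \<Longrightarrow> w (- a) \<noteq> w (- b)"
  using w_inj[of "- a" "- b"] by (auto simp: sdom_iff)
end

lemma beta_lt: "v < l \<Longrightarrow> 1 \<le> l \<Longrightarrow> beta l v < l"
  by (auto simp: beta_def)

locale insn = node +
  fixes i l :: int
  assumes i1: "1 \<le> i" and i2: "i \<le> int n + 1" and l1: "max_neg n w < l" and l2: "l \<le> int n + 1"
begin

definition W where "W = snd (ins_perm n w i l)"
definition e :: "int \<Rightarrow> int" where "e x = (if x \<le> - i then x - 1 else if i \<le> x then x + 1 else x)"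

lemma l_pos: "1 \<le> l" using l1 mn_nonneg[of n w] by simp

lemma W_negK: "1 \<le> K \<Longrightarrow> K \<le> int n + 1 \<Longrightarrow> W (- K) = ins_neg w i l K"
  by (simp add: W_def ins_perm_def)
lemma W_posK: "1 \<le> K \<Longrightarrow> K \<le> int n + 1 \<Longrightarrow> W K = - ins_neg w i l K"
  by (simp add: W_def ins_perm_def)
lemma W_out: "x \<notin> sdom (Suc n) \<Longrightarrow> W x = x"
  by (auto simp: W_def ins_perm_def sdom_iff)
lemma W_odd: "W (- x) = - W x"
  by (auto simp: W_def ins_perm_def)

lemma W_mi: "W (- i) = l" using i1 i2 by (simp add: W_negK ins_neg_def)
lemma W_i: "W i = - l" using i1 i2 by (simp add: W_posK ins_neg_def)

lemma W_e: assumes "x \<in> sdom n" shows "W (e x) = beta l (w x)"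
proof -
  have x: "x \<noteq> 0" "- int n \<le> x" "x \<le> int n" using assms by (auto simp: sdom_iff)
  show ?thesis
  proof (cases "x < 0")
    case True
    then show ?thesis using x i1 W_negK[of "- e x"] by (auto simp: e_def ins_neg_def)
  next
    case False
    then have "W (e x) = - ins_neg w i l (e x)" using x i1 W_posK[of "e x"] by (auto simp: e_def)
    also have "\<dots> = beta l (w x)" using False x i1
      by (auto simp: e_def ins_neg_def w_odd beta_odd[OF l_pos])
    finally show ?thesis .
  qed
qed

lemma e_mono: "x < y \<Longrightarrow> e x < e y" using i1 by (auto simp: e_def)
lemma e_less_iff: "e x < e y \<longleftrightarrow> x < y"
  by (metis e_mono linorder_neq_iff order_less_asym)
lemma e_sdom: "x \<in> sdom n \<Longrightarrow> e x \<in> sdom (Suc n) \<and> e x \<noteq> i \<and> e x \<noteq> - i"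
  using i1 i2 by (auto simp: e_def sdom_iff)
lemma e_neg_iff: "x \<in> sdom n \<Longrightarrow> e x < 0 \<longleftrightarrow> x < 0"
  using i1 by (auto simp: e_def sdom_iff)
lemma e_lt_mi: "e x < - i \<longleftrightarrow> x \<le> - i"
  using i1 by (auto simp: e_def)
lemma cover: "X \<in> sdom (Suc n) \<Longrightarrow> X = - i \<or> X = i \<or> (\<exists>x\<in>sdom n. X = e x)"
proof -
  assume X: "X \<in> sdom (Suc n)"
  show ?thesis
  proof (cases "X = - i \<or> X = i")
    case False
    define x where "x = (if X < - i then X + 1 else if i < X then X - 1 else X)"
    have "x \<in> sdom n" "X = e x" using X False i1 i2 by (auto simp: x_def e_def sdom_iff)
    then show ?thesis by blast
  qed auto
qed

lemma F1: assumes "X \<in> sdom (Suc n)" "X < 0" shows "W X \<le> l"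
proof -
  consider "X = - i" | "X = i" | x where "x \<in> sdom n" "X = e x" using cover[OF assms(1)] by blast
  then show ?thesis
  proof cases
    case 1 then show ?thesis by (simp add: W_mi)
  next
    case 2 then show ?thesis using assms i1 by simp
  next
    case 3
    then have "x < 0" using e_neg_iff assms by blast
    then have "w x < l" using neg_le[OF 3(1)] l1 by simp
    then show ?thesis using 3 W_e beta_lt l_pos by fastforce
  qed
qed

lemma F1': assumes "X \<in> sdom (Suc n)" "X < 0" "X \<noteq> - i" shows "W X < l"
proof -
  obtain x where x: "x \<in> sdom n" "X = e x" using cover[OF assms(1)] assms i1 by auto
  then have "x < 0" using e_neg_iff assms by blast
  then have "w x < l" using neg_le[OF x(1)] l1 by simp
  then show ?thesis using x W_e beta_lt l_pos by fastforce
qed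

lemma F2: assumes "X \<in> sdom (Suc n)" "l < W X"
  shows "\<exists>x\<in>sdom n. X = e x \<and> 0 < x \<and> l \<le> w x \<and> l \<le> int n"
proof -
  have "X \<noteq> - i" "X \<noteq> i" using assms W_mi W_i l_pos by auto
  then obtain x where x: "x \<in> sdom n" "X = e x" using cover[OF assms(1)] by auto
  have "\<not> X < 0" using F1 assms by force
  then have "0 < x" using e_neg_iff x by (auto simp: sdom_iff)
  moreover have "l \<le> w x" using assms x W_e l_pos by (auto simp: beta_def split: if_splits)
  moreover have "w x \<le> int n" using w_in[OF x(1)] by (simp add: sdom_iff)
  ultimately show ?thesis using x by auto
qed

end


lemma dec_no123: "dec_from n w i \<Longrightarrow> no123_from n w i"
  unfolding dec_from_def no123_from_def
proof (clarify)
  fix a b c assume d: "\<forall>a b. i \<le> a \<longrightarrow> a < b \<longrightarrow> b \<le> int n \<longrightarrow> w (- a) < w (- b)"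
    and h: "i \<le> a" "a < b" "b < c" "c \<le> int n" "w (- c) < w (- b)" "w (- b) < w (- a)"
  have "w (- a) < w (- b)" using d h by auto
  then show False using h by simp
qed

context insn begin

definition VC where "VC \<longleftrightarrow> (l \<le> int n \<and> dec_from n w i) \<or> (l = int n + 1 \<and> no123_from n w i)"

lemma VC_no123: "VC \<Longrightarrow> no123_from n w i"
  unfolding VC_def using dec_no123 by blast

lemma before: assumes "X \<in> sdom (Suc n)" "X < - i" shows "\<exists>x\<in>sdom n. X = e x \<and> x \<le> - i"
proof -
  obtain x where x: "x \<in> sdom n" "X = e x" using cover[OF assms(1)] assms i1 by auto
  then show ?thesis using e_lt_mi assms by auto
qed

lemma after2: assumes "X \<in> sdom (Suc n)" "Y \<in> sdom (Suc n)" "X < Y" "l < W X" "W X < W Y"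
  shows False
proof -
  obtain x where x: "x \<in> sdom n" "X = e x" "0 < x" "l \<le> w x" using F2[OF assms(1,4)] by blast
  have "l < W Y" using assms(4,5) by simp
  then obtain y where y: "y \<in> sdom n" "Y = e y" "0 < y" using F2[OF assms(2)] by blast
  have "x < y" using x y assms(3) e_less_iff by simp
  moreover have "w x < w y" using assms(5) x y W_e beta_less_iff by simp
  ultimately have "w x \<le> max_neg n w" using inv x y unfolding Inv_def by (auto simp: sdom_iff)
  then show False using x l1 by simp
qed

lemma noPat_mi:
  assumes vc: VC and s: "a \<in> sdom (Suc n)" "b \<in> sdom (Suc n)" "c \<in> sdom (Suc n)" "d \<in> sdom (Suc n)"
    and o: "a < b" "b < c" "c < d" and v: "W a < W b" "W b < W c" "W c < W d"
    and mi: "- i = a \<or> - i = b \<or> - i = c \<or> - i = d"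
  shows False
proof -
  consider "- i = a" | "- i = b" | "- i = c" | "- i = d" using mi by blast
  then show False
  proof cases
    case 1 then show False using after2[OF s(2,3) o(2)] v W_mi by simp
  next
    case 2 then show False using after2[OF s(3,4) o(3)] v W_mi by simp
  next
    case 3
    obtain xa where xa: "xa \<in> sdom n" "a = e xa" "xa \<le> - i" using before[OF s(1)] o 3 by auto
    obtain xb where xb: "xb \<in> sdom n" "b = e xb" "xb \<le> - i" using before[OF s(2)] o 3 by auto
    have "l < W d" using v 3 W_mi by simp
    then have ln: "l \<le> int n" using F2[OF s(4)] by blast
    then have dec: "dec_from n w i" using vc unfolding VC_def by auto
    have "xa < xb" using xa xb o e_less_iff by simp
    moreover have "w xa < w xb" using v xa xb W_e beta_less_iff by simp
    moreover have "w (- (- xb)) < w (- (- xa))"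
      using dec[unfolded dec_from_def, rule_format, of "- xb" "- xa"] xa xb \<open>xa < xb\<close> by (auto simp: sdom_iff)
    ultimately show False by simp
  next
    case 4
    obtain xa where xa: "xa \<in> sdom n" "a = e xa" "xa \<le> - i" using before[OF s(1)] o 4 by auto
    obtain xb where xb: "xb \<in> sdom n" "b = e xb" "xb \<le> - i" using before[OF s(2)] o 4 by auto
    obtain xc where xc: "xc \<in> sdom n" "c = e xc" "xc \<le> - i" using before[OF s(3)] o 4 by auto
    have "xa < xb" "xb < xc" using xa xb xc o e_less_iff by simp_all
    moreover have "w xa < w xb" "w xb < w xc" using v xa xb xc W_e beta_less_iff by simp_all
    moreover have "i \<le> - xc" "- xc < - xb" "- xb < - xa" "- xa \<le> int n"
      using xa xb xc \<open>xa < xb\<close> \<open>xb < xc\<close> by (auto simp: sdom_iff)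
    ultimately have "\<exists>a b c. i \<le> a \<and> a < b \<and> b < c \<and> c \<le> int n \<and> w (- c) < w (- b) \<and> w (- b) < w (- a)"
      by (intro exI[of _ "- xc"] exI[of _ "- xb"] exI[of _ "- xa"]) simp
    then show False using VC_no123[OF vc] unfolding no123_from_def by blast
  qed
qed

lemma sdom_neg: "x \<in> sdom k \<Longrightarrow> - x \<in> sdom k" by (auto simp: sdom_iff)

lemma VC_avoids: assumes vc: VC shows "avoids_1234 (Suc n) W"
  unfolding avoids_1234_def
proof (intro notI, elim exE conjE)
  fix a b c d
  assume s: "a \<in> sdom (Suc n)" "b \<in> sdom (Suc n)" "c \<in> sdom (Suc n)" "d \<in> sdom (Suc n)"
    and o: "a < b" "b < c" "c < d" and v: "W a < W b" "W b < W c" "W c < W d"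
  show False
  proof (cases "- i = a \<or> - i = b \<or> - i = c \<or> - i = d")
    case True then show False using noPat_mi[OF vc s o v] by blast
  next
    case F1: False
    show False
    proof (cases "i = a \<or> i = b \<or> i = c \<or> i = d")
      case True
      show False
        apply (rule noPat_mi[OF vc sdom_neg[OF s(4)] sdom_neg[OF s(3)] sdom_neg[OF s(2)] sdom_neg[OF s(1)]])
        using o v True by (auto simp: W_odd)
    next
      case False
      obtain xa where xa: "xa \<in> sdom n" "a = e xa" using cover[OF s(1)] F1 False by auto
      obtain xb where xb: "xb \<in> sdom n" "b = e xb" using cover[OF s(2)] F1 False by auto
      obtain xc where xc: "xc \<in> sdom n" "c = e xc" using cover[OF s(3)] F1 False by auto
      obtain xd where xd: "xd \<in> sdom n" "d = e xd" using cover[OF s(4)] F1 False by auto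
      have "xa < xb" "xb < xc" "xc < xd" using xa xb xc xd o e_less_iff by simp_all
      moreover have "w xa < w xb" "w xb < w xc" "w xc < w xd" using v xa xb xc xd W_e beta_less_iff by simp_all
      ultimately have "\<exists>a b c d. a \<in> sdom n \<and> b \<in> sdom n \<and> c \<in> sdom n \<and> d \<in> sdom n
      \<and> a < b \<and> b < c \<and> c < d \<and> w a < w b \<and> w b < w c \<and> w c < w d"
        using xa xb xc xd by (intro exI[of _ xa] exI[of _ xb] exI[of _ xc] exI[of _ xd]) simp
      then show False using av unfolding avoids_1234_def by blast
    qed
  qed
qed

lemma avoids_VC: assumes A: "avoids_1234 (Suc n) W" shows VC
proof (rule ccontr)
  assume nvc: "\<not> VC"
  have sm: "W (e x) < l" if "x \<in> sdom n" "x \<le> - i" for x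
  proof -
    have "w x < l" using neg_le[OF that(1)] that(2) i1 l1 by simp
    then show ?thesis using W_e[OF that(1)] beta_lt l_pos by simp
  qed
  have esd: "e x \<in> sdom (Suc n)" if "x \<in> sdom n" for x using e_sdom that by blast
  have misd: "- i \<in> sdom (Suc n)" using i1 i2 by (simp add: sdom_iff)
  show False
  proof (cases "l \<le> int n")
    case True
    then have "\<not> dec_from n w i" using nvc unfolding VC_def by auto
    then obtain a b where ab: "i \<le> a" "a < b" "b \<le> int n" "\<not> w (- a) < w (- b)"
      unfolding dec_from_def by auto
    have ne: "w (- a) \<noteq> w (- b)" using w_lt[of a b] ab i1 by simp
    have sa: "- a \<in> sdom n" and sb: "- b \<in> sdom n" using ab i1 by (auto simp: sdom_iff)
    have "l \<in> sdom n" using True l_pos by (simp add: sdom_iff)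
    then obtain x where x: "x \<in> sdom n" "w x = l" using sp_surj[OF sp] by blast
    have "0 < x"
    proof (rule ccontr)
      assume "\<not> 0 < x" then have "x < 0" using x by (auto simp: sdom_iff)
      then show False using neg_le[OF x(1)] x l1 by simp
    qed
    have "W (e x) = l + 1" using W_e[OF x(1)] x(2) l_pos by (simp add: beta_def)
    moreover have "e (- b) < e (- a)" "e (- a) < - i" "- i < e x"
      using ab e_less_iff e_lt_mi \<open>0 < x\<close> e_neg_iff[OF x(1)] i1 by auto
    moreover have "W (e (- b)) < W (e (- a))" using W_e sa sb ab ne beta_less_iff by simp
    moreover have "W (e (- a)) < W (- i)" using sm[OF sa] ab W_mi by simp
    ultimately have "\<exists>a b c d. a \<in> sdom (Suc n) \<and> b \<in> sdom (Suc n) \<and> c \<in> sdom (Suc n) \<and> d \<in> sdom (Suc n)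
      \<and> a < b \<and> b < c \<and> c < d \<and> W a < W b \<and> W b < W c \<and> W c < W d"
      using esd[OF sa] esd[OF sb] esd[OF x(1)] misd W_mi
      by (intro exI[of _ "e (- b)"] exI[of _ "e (- a)"] exI[of _ "- i"] exI[of _ "e x"]) simp
    then show False using A unfolding avoids_1234_def by blast
  next
    case False
    then have l: "l = int n + 1" using l2 by simp
    then have "\<not> no123_from n w i" using nvc unfolding VC_def by auto
    then obtain a b c where abc: "i \<le> a" "a < b" "b < c" "c \<le> int n" "w (- c) < w (- b)" "w (- b) < w (- a)"
      unfolding no123_from_def by auto
    have sa: "- a \<in> sdom n" and sb: "- b \<in> sdom n" and sc: "- c \<in> sdom n" using abc i1 by (auto simp: sdom_iff)
    have "e (- c) < e (- b)" "e (- b) < e (- a)" "e (- a) < - i"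
      using abc e_less_iff e_lt_mi by auto
    moreover have "W (e (- c)) < W (e (- b))" "W (e (- b)) < W (e (- a))"
      using W_e sa sb sc abc beta_less_iff by simp_all
    moreover have "W (e (- a)) < W (- i)" using sm[OF sa] abc W_mi by simp
    ultimately have "\<exists>a b c d. a \<in> sdom (Suc n) \<and> b \<in> sdom (Suc n) \<and> c \<in> sdom (Suc n) \<and> d \<in> sdom (Suc n)
      \<and> a < b \<and> b < c \<and> c < d \<and> W a < W b \<and> W b < W c \<and> W c < W d"
      using esd[OF sa] esd[OF sb] esd[OF sc] misd
      by (intro exI[of _ "e (- c)"] exI[of _ "e (- b)"] exI[of _ "e (- a)"] exI[of _ "- i"]) simp
    then show False using A unfolding avoids_1234_def by blast
  qed
qed

lemma avoids_iff: "avoids_1234 (Suc n) W \<longleftrightarrow> VC"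
  using VC_avoids avoids_VC by blast

end


lemma beta_sdom: "v \<in> sdom n \<Longrightarrow> 1 \<le> l \<Longrightarrow> beta l v \<in> sdom (Suc n)"
  by (auto simp: beta_def sdom_iff)

context insn begin

lemma W_in: assumes "X \<in> sdom (Suc n)" shows "W X \<in> sdom (Suc n)"
proof -
  consider "X = - i" | "X = i" | x where "x \<in> sdom n" "X = e x" using cover[OF assms] by blast
  then show ?thesis
  proof cases
    case 1 then show ?thesis using W_mi l_pos l2 by (simp add: sdom_iff)
  next
    case 2 then show ?thesis using W_i l_pos l2 by (simp add: sdom_iff)
  next
    case 3 then show ?thesis using W_e beta_sdom w_in l_pos by simp
  qed
qed

lemma W_inj: "inj_on W (sdom (Suc n))"
proof
  fix X Y assume X: "X \<in> sdom (Suc n)" and Y: "Y \<in> sdom (Suc n)" and eq: "W X = W Y"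
  have absne: "\<bar>W (e x)\<bar> \<noteq> l" if "x \<in> sdom n" for x using W_e[OF that] beta_abs_ne by simp
  consider "X = - i" | "X = i" | x where "x \<in> sdom n" "X = e x" using cover[OF X] by blast
  then show "X = Y"
  proof cases
    case 1
    consider "Y = - i" | "Y = i" | y where "y \<in> sdom n" "Y = e y" using cover[OF Y] by blast
    then show ?thesis
    proof cases
      case 2 then show ?thesis using 1 eq W_mi W_i l_pos by simp
    next
      case 3 then show ?thesis using 1 eq W_mi absne[OF 3(1)] l_pos by simp
    qed (use 1 in simp)
  next
    case 2
    consider "Y = - i" | "Y = i" | y where "y \<in> sdom n" "Y = e y" using cover[OF Y] by blast
    then show ?thesis
    proof cases
      case 1 then show ?thesis using 2 eq W_mi W_i l_pos by simp
    next
      case 3 then show ?thesis using 2 eq W_i absne[OF 3(1)] l_pos by simp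
    qed (use 2 in simp)
  next
    case 3
    consider "Y = - i" | "Y = i" | y where "y \<in> sdom n" "Y = e y" using cover[OF Y] by blast
    then show ?thesis
    proof cases
      case 1 then show ?thesis using 3 eq W_mi absne[OF 3(1)] l_pos by simp
    next
      case 2 then show ?thesis using 3 eq W_i absne[OF 3(1)] l_pos by simp
    next
      case y: 3
      then have "w x = w y" using 3 eq W_e beta_eq_iff by simp
      then have "x = y" using w_inj 3 y by blast
      then show ?thesis using 3 y by simp
    qed
  qed
qed

lemma W_sp: "signed_perm (Suc n) W"
proof -
  have "W ` sdom (Suc n) = sdom (Suc n)"
    by (rule endo_inj_surj) (use W_in W_inj in auto)
  then show ?thesis unfolding signed_perm_def bij_betw_def using W_inj W_odd W_out by blast
qed

lemma e_inj: "inj_on e A"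
  by (rule inj_onI) (metis e_mono linorder_neq_iff order_less_irrefl)

lemma W_card: "card {P \<in> {1 .. int (Suc n)}. W P > 0} = j"
proof -
  have "{P \<in> {1 .. int (Suc n)}. W P > 0} = e ` {p \<in> {1 .. int n}. w p > 0}"
  proof (intro equalityI subsetI)
    fix P assume P: "P \<in> {P \<in> {1 .. int (Suc n)}. W P > 0}"
    then have Ps: "P \<in> sdom (Suc n)" by (auto simp: sdom_iff)
    consider "P = - i" | "P = i" | x where "x \<in> sdom n" "P = e x" using cover[OF Ps] by blast
    then show "P \<in> e ` {p \<in> {1 .. int n}. w p > 0}"
    proof cases
      case 1 then show ?thesis using P i1 by simp
    next
      case 2 then show ?thesis using P W_i l_pos by simp
    next
      case 3
      then have "0 < x" using e_neg_iff[OF 3(1)] P by (auto simp: sdom_iff)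
      moreover have "0 < w x" using P 3 W_e beta_pos_iff[OF l_pos] by simp
      ultimately show ?thesis using 3 by (auto simp: sdom_iff)
    qed
  next
    fix P assume "P \<in> e ` {p \<in> {1 .. int n}. w p > 0}"
    then obtain x where x: "1 \<le> x" "x \<le> int n" "0 < w x" "P = e x" by auto
    then have xs: "x \<in> sdom n" by (simp add: sdom_iff)
    have "0 < W P" using x W_e[OF xs] beta_pos_iff[OF l_pos] by simp
    moreover have "1 \<le> P" "P \<le> int (Suc n)" using x i1 by (auto simp: e_def)
    ultimately show "P \<in> {P \<in> {1 .. int (Suc n)}. W P > 0}" by simp
  qed
  then have "card {P \<in> {1 .. int (Suc n)}. W P > 0} = card {p \<in> {1 .. int n}. w p > 0}"
    using card_image[OF e_inj] by simp
  then show ?thesis using inB by (simp add: in_Bj1234_def)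
qed

lemma W_mn: "max_neg (Suc n) W = l"
proof (rule mn_eqI)
  fix K assume "1 \<le> K" "K \<le> int (Suc n)"
  then show "W (- K) \<le> l" using F1[of "- K"] by (simp add: sdom_iff)
next
  show "0 \<le> l" using l_pos by simp
  show "l = 0 \<or> (\<exists>k\<ge>1. k \<le> int (Suc n) \<and> W (- k) = l)" using W_mi i1 i2 by auto
qed

lemma W_Inv: "Inv (Suc n) W"
  unfolding Inv_def W_mn
proof (intro allI impI)
  fix P Q assume PQ: "1 \<le> P" "P < Q" "Q \<le> int (Suc n)" "W P < W Q"
  have Ps: "P \<in> sdom (Suc n)" and Qs: "Q \<in> sdom (Suc n)" using PQ by (auto simp: sdom_iff)
  consider "P = - i" | "P = i" | x where "x \<in> sdom n" "P = e x" using cover[OF Ps] by blast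
  then show "W P \<le> l"
  proof cases
    case 1 then show ?thesis using PQ i1 by simp
  next
    case 2 then show ?thesis using W_i l_pos by simp
  next
    case 3
    have x0: "0 < x" using e_neg_iff[OF 3(1)] PQ 3 by (auto simp: sdom_iff)
    consider "Q = - i" | "Q = i" | y where "y \<in> sdom n" "Q = e y" using cover[OF Qs] by blast
    then show ?thesis
    proof cases
      case 1 then show ?thesis using PQ i1 by simp
    next
      case 2 then show ?thesis using PQ W_i l_pos by simp
    next
      case y: 3
      have "x < y" using 3 y PQ e_less_iff by simp
      moreover have "w x < w y" using 3 y PQ W_e beta_less_iff by simp
      ultimately have "w x \<le> max_neg n w" using inv x0 y(1) unfolding Inv_def by (auto simp: sdom_iff)
      then have "w x < l" using l1 by simp
      then show ?thesis using 3 W_e beta_lt[of "w x" l] l_pos by simp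
    qed
  qed
qed

lemma child_inB: "VC \<Longrightarrow> in_Bj1234 j (Suc n) W"
  unfolding in_Bj1234_def using W_sp W_card VC_avoids by simp

end


context insn begin

lemma WK_gt: "i < K \<Longrightarrow> K \<le> int n + 1 \<Longrightarrow> W (- K) = beta l (w (- (K - 1)))"
  using i1 by (simp add: W_negK ins_neg_def)
lemma WK_lt: "1 \<le> K \<Longrightarrow> K < i \<Longrightarrow> W (- K) = beta l (w (- K))"
  using i2 by (simp add: W_negK ins_neg_def)
lemma bw_small: "1 \<le> k \<Longrightarrow> k \<le> int n \<Longrightarrow> beta l (w (- k)) < l"
  using fh_le[of k] l1 beta_lt[of "w (- k)" l] l_pos by simp
lemma WK_le: "1 \<le> K \<Longrightarrow> K \<le> int n + 1 \<Longrightarrow> W (- K) \<le> l"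
  using F1[of "- K"] by (simp add: sdom_iff)
lemma w_ne: "1 \<le> a \<Longrightarrow> a < b \<Longrightarrow> b \<le> int n \<Longrightarrow> \<not> w (- a) < w (- b) \<Longrightarrow> w (- b) < w (- a)"
  using w_lt[of a b] by simp

lemma dec_gt: assumes "i < I" shows "dec_from (Suc n) W I \<longleftrightarrow> dec_from n w (I - 1)"
proof
  assume d: "dec_from (Suc n) W I"
  show "dec_from n w (I - 1)" unfolding dec_from_def
  proof (intro allI impI)
    fix a b assume ab: "I - 1 \<le> a" "a < b" "b \<le> int n"
    have "W (- (a + 1)) < W (- (b + 1))" using d[unfolded dec_from_def, rule_format, of "a + 1" "b + 1"] ab by simp
    then show "w (- a) < w (- b)" using WK_gt[of "a + 1"] WK_gt[of "b + 1"] ab assms beta_less_iff by simp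
  qed
next
  assume d: "dec_from n w (I - 1)"
  show "dec_from (Suc n) W I" unfolding dec_from_def
  proof (intro allI impI)
    fix a b assume ab: "I \<le> a" "a < b" "b \<le> int (Suc n)"
    have "w (- (a - 1)) < w (- (b - 1))" using d[unfolded dec_from_def, rule_format, of "a - 1" "b - 1"] ab by simp
    then show "W (- a) < W (- b)" using WK_gt[of a] WK_gt[of b] ab assms beta_less_iff by simp
  qed
qed

lemma dec_le: assumes "1 \<le> I" "I \<le> i"
  shows "dec_from (Suc n) W I \<longleftrightarrow> (i = int n + 1 \<and> dec_from n w I)"
proof
  assume d: "dec_from (Suc n) W I"
  have ii: "i = int n + 1"
  proof (rule ccontr)
    assume "i \<noteq> int n + 1"
    then have "i + 1 \<le> int n + 1" using i2 by simp
    then have "W (- i) < W (- (i + 1))" using d[unfolded dec_from_def, rule_format, of i "i + 1"] assms by simp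
    moreover have "W (- (i + 1)) = beta l (w (- i))" using WK_gt[of "i + 1"] \<open>i + 1 \<le> int n + 1\<close> by simp
    moreover have "beta l (w (- i)) < l" using bw_small i1 \<open>i + 1 \<le> int n + 1\<close> by simp
    ultimately show False using W_mi by simp
  qed
  moreover have "dec_from n w I" unfolding dec_from_def
  proof (intro allI impI)
    fix a b assume ab: "I \<le> a" "a < b" "b \<le> int n"
    have "W (- a) < W (- b)" using d ab unfolding dec_from_def by simp
    then show "w (- a) < w (- b)" using WK_lt[of a] WK_lt[of b] ab assms ii beta_less_iff by simp
  qed
  ultimately show "i = int n + 1 \<and> dec_from n w I" by simp
next
  assume h: "i = int n + 1 \<and> dec_from n w I"
  show "dec_from (Suc n) W I" unfolding dec_from_def
  proof (intro allI impI)
    fix a b assume ab: "I \<le> a" "a < b" "b \<le> int (Suc n)"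
    show "W (- a) < W (- b)"
    proof (cases "b = i")
      case True
      then show ?thesis using WK_lt[of a] bw_small[of a] ab assms h W_mi by simp
    next
      case False
      have "w (- a) < w (- b)" using h ab False unfolding dec_from_def by simp
      then show ?thesis using WK_lt[of a] WK_lt[of b] ab assms h False beta_less_iff by simp
    qed
  qed
qed

lemma no123_gt: assumes "i < I" shows "no123_from (Suc n) W I \<longleftrightarrow> no123_from n w (I - 1)"
proof
  assume d: "no123_from (Suc n) W I"
  show "no123_from n w (I - 1)" unfolding no123_from_def
  proof (intro notI, elim exE conjE)
    fix a b c assume h: "I - 1 \<le> a" "a < b" "b < c" "c \<le> int n" "w (- c) < w (- b)" "w (- b) < w (- a)"
    have "W (- (c + 1)) < W (- (b + 1))" "W (- (b + 1)) < W (- (a + 1))"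
      using h WK_gt[of "a + 1"] WK_gt[of "b + 1"] WK_gt[of "c + 1"] assms beta_less_iff by simp_all
    moreover have "I \<le> a + 1" "a + 1 < b + 1" "b + 1 < c + 1" "c + 1 \<le> int (Suc n)" using h by simp_all
    ultimately show False using d unfolding no123_from_def by blast
  qed
next
  assume d: "no123_from n w (I - 1)"
  show "no123_from (Suc n) W I" unfolding no123_from_def
  proof (intro notI, elim exE conjE)
    fix a b c assume h: "I \<le> a" "a < b" "b < c" "c \<le> int (Suc n)" "W (- c) < W (- b)" "W (- b) < W (- a)"
    have "w (- (c - 1)) < w (- (b - 1))" "w (- (b - 1)) < w (- (a - 1))"
      using h WK_gt[of a] WK_gt[of b] WK_gt[of c] assms beta_less_iff by simp_all
    moreover have "I - 1 \<le> a - 1" "a - 1 < b - 1" "b - 1 < c - 1" "c - 1 \<le> int n" using h by simp_all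
    ultimately show False using d unfolding no123_from_def by blast
  qed
qed

lemma no123_le: assumes I: "1 \<le> I" "I \<le> i"
  shows "no123_from (Suc n) W I \<longleftrightarrow> (no123_from n w I \<and> dec_from n w i)"
proof
  assume d: "no123_from (Suc n) W I"
  define s where "s k = (if i \<le> k then k + 1 else k)" for k
  have s_mono: "s a < s b" if "a < b" for a b using that by (auto simp: s_def)
  have Ws: "W (- s k) = beta l (w (- k))" if "1 \<le> k" "k \<le> int n" for k
    using that WK_gt[of "s k"] WK_lt[of "s k"] by (auto simp: s_def)
  have "no123_from n w I" unfolding no123_from_def
  proof (intro notI, elim exE conjE)
    fix a b c assume h: "I \<le> a" "a < b" "b < c" "c \<le> int n" "w (- c) < w (- b)" "w (- b) < w (- a)"
    have "W (- s c) < W (- s b)" "W (- s b) < W (- s a)" using h Ws I beta_less_iff by simp_all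
    moreover have "I \<le> s a" "s a < s b" "s b < s c" "s c \<le> int (Suc n)" using h s_mono by (auto simp: s_def)
    ultimately show False using d unfolding no123_from_def by blast
  qed
  moreover have "dec_from n w i"
  proof (rule ccontr)
    assume "\<not> dec_from n w i"
    then obtain a b where ab: "i \<le> a" "a < b" "b \<le> int n" "\<not> w (- a) < w (- b)" unfolding dec_from_def by auto
    then have lt: "w (- b) < w (- a)" using w_ne i1 by simp
    have "W (- (b + 1)) < W (- (a + 1))" "W (- (a + 1)) < W (- i)"
      using ab WK_gt[of "a + 1"] WK_gt[of "b + 1"] lt beta_less_iff bw_small[of a] i1 W_mi by simp_all
    moreover have "I \<le> i" "i < a + 1" "a + 1 < b + 1" "b + 1 \<le> int (Suc n)" using ab I by simp_all
    ultimately show False using d unfolding no123_from_def by blast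
  qed
  ultimately show "no123_from n w I \<and> dec_from n w i" by simp
next
  assume h: "no123_from n w I \<and> dec_from n w i"
  show "no123_from (Suc n) W I" unfolding no123_from_def
  proof (intro notI, elim exE conjE)
    fix a b c assume p: "I \<le> a" "a < b" "b < c" "c \<le> int (Suc n)" "W (- c) < W (- b)" "W (- b) < W (- a)"
    have Wa: "W (- a) \<le> l" using WK_le[of a] p I by simp
    have Wb: "W (- b) \<le> l" using WK_le[of b] p I by simp
    show False
    proof (cases "b = i \<or> c = i")
      case True then show False using p Wa Wb W_mi by auto
    next
      case nbc: False
      show False
      proof (cases "a = i")
        case True
        then have "w (- (c - 1)) < w (- (b - 1))" using p WK_gt[of b] WK_gt[of c] beta_less_iff by simp
        moreover have "w (- (b - 1)) < w (- (c - 1))"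
          using h[THEN conjunct2, unfolded dec_from_def, rule_format, of "b - 1" "c - 1"] p True by simp
        ultimately show False by simp
      next
        case False
        define ob where "ob k = (if i < k then k - 1 else k)" for k
        have Wo: "W (- k) = beta l (w (- ob k))" if "1 \<le> k" "k \<le> int n + 1" "k \<noteq> i" for k
          using that WK_gt[of k] WK_lt[of k] by (auto simp: ob_def)
        have "w (- ob c) < w (- ob b)" "w (- ob b) < w (- ob a)"
          using p Wo[of a] Wo[of b] Wo[of c] nbc False I beta_less_iff by simp_all
        moreover have "I \<le> ob a" "ob a < ob b" "ob b < ob c" "ob c \<le> int n"
          using p nbc False I i2 by (auto simp: ob_def)
        ultimately show False using h unfolding no123_from_def by blast
      qed
    qed
  qed
qed

end


lemma suc_aux_eq: "suc_aux x y (Suc k) =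
   {(a, y + 1, z) | a z. 2 \<le> a \<and> a \<le> x + 1 \<and> 1 \<le> z \<and> z \<le> int (Suc k)} \<union> {(x, a, 1) | a. x + 1 \<le> a \<and> a \<le> y}"
proof (induction k)
  case 0 then show ?case by auto
next
  case (Suc k)
  have "suc_aux x y (Suc (Suc k)) = {(a, y + 1, int (Suc (Suc k))) | a. 2 \<le> a \<and> a \<le> x + 1} \<union> suc_aux x y (Suc k)"
    by simp
  also have "\<dots> = {(a, y + 1, z) | a z. 2 \<le> a \<and> a \<le> x + 1 \<and> 1 \<le> z \<and> z \<le> int (Suc (Suc k))} \<union> {(x, a, 1) | a. x + 1 \<le> a \<and> a \<le> y}"
    unfolding Suc.IH by auto
  finally show ?case .
qed

definition labc :: "int \<Rightarrow> int \<Rightarrow> int \<Rightarrow> int \<times> int \<Rightarrow> int \<times> int \<times> int" where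
  "labc N tx ty = (\<lambda>(i, l). (if i = N + 1 then N + 3 - tx else if tx \<le> i then N + 2 - i else N + 2 - tx,
                              if tx \<le> i then N + 3 - ty else N + 2 - i, N + 2 - l))"

definition Vset :: "int \<Rightarrow> int \<Rightarrow> int \<Rightarrow> int \<Rightarrow> (int \<times> int) set" where
  "Vset N tx ty m = {(i, l). 1 \<le> i \<and> i \<le> N + 1 \<and> m < l \<and> l \<le> N + 1
                      \<and> ((l \<le> N \<and> tx \<le> i) \<or> (l = N + 1 \<and> ty \<le> i))}"

lemma labc_inj:
  assumes "1 \<le> ty" "ty \<le> tx" "tx \<le> N + 1"
  shows "inj_on (labc N tx ty) (Vset N tx ty m)"
proof
  fix p q assume p: "p \<in> Vset N tx ty m" and q: "q \<in> Vset N tx ty m" and e: "labc N tx ty p = labc N tx ty q"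
  obtain i l where pil: "p = (i, l)" by (cases p)
  obtain i' l' where qil: "q = (i', l')" by (cases q)
  show "p = q" using p q e assms unfolding pil qil labc_def Vset_def
    by (auto split: if_splits)
qed

lemma labc_img:
  assumes "1 \<le> ty" "ty \<le> tx" "tx \<le> N + 1" "0 \<le> m" "m \<le> N"
  shows "labc N tx ty ` Vset N tx ty m = suc_aux (N + 2 - tx) (N + 2 - ty) (nat (N + 1 - m))"
proof -
  obtain k where k: "nat (N + 1 - m) = Suc k" using assms by (metis Suc_pred' zero_less_nat_eq add_pos_nonneg
     diff_gt_0_iff_gt less_add_one order_le_less_trans)
  have kk: "int (Suc k) = N + 1 - m" using k assms by linarith
  show ?thesis unfolding k suc_aux_eq kk
  proof (intro equalityI subsetI)
    fix t assume "t \<in> labc N tx ty ` Vset N tx ty m"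
    then obtain i l where il: "(i, l) \<in> Vset N tx ty m" "t = labc N tx ty (i, l)" by auto
    show "t \<in> {(a, N + 2 - ty + 1, z) | a z. 2 \<le> a \<and> a \<le> N + 2 - tx + 1 \<and> 1 \<le> z \<and> z \<le> N + 1 - m} \<union>
              {(N + 2 - tx, a, 1) | a. N + 2 - tx + 1 \<le> a \<and> a \<le> N + 2 - ty}"
    proof (cases "tx \<le> i")
      case True
      then show ?thesis using il assms unfolding labc_def Vset_def by auto
    next
      case False
      then show ?thesis using il assms unfolding labc_def Vset_def by auto
    qed
  next
    fix t assume t: "t \<in> {(a, N + 2 - ty + 1, z) | a z. 2 \<le> a \<and> a \<le> N + 2 - tx + 1 \<and> 1 \<le> z \<and> z \<le> N + 1 - m} \<union>
              {(N + 2 - tx, a, 1) | a. N + 2 - tx + 1 \<le> a \<and> a \<le> N + 2 - ty}"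
    show "t \<in> labc N tx ty ` Vset N tx ty m"
    proof (cases "t \<in> {(a, N + 2 - ty + 1, z) | a z. 2 \<le> a \<and> a \<le> N + 2 - tx + 1 \<and> 1 \<le> z \<and> z \<le> N + 1 - m}")
      case True
      then obtain a z where az: "t = (a, N + 2 - ty + 1, z)" "2 \<le> a" "a \<le> N + 2 - tx + 1" "1 \<le> z" "z \<le> N + 1 - m" by blast
      define i where "i = (if a = N + 3 - tx then N + 1 else N + 2 - a)"
      define l where "l = N + 2 - z"
      have "(i, l) \<in> Vset N tx ty m" using az assms unfolding Vset_def i_def l_def by auto
      moreover have "t = labc N tx ty (i, l)" using az assms unfolding labc_def i_def l_def by auto
      ultimately show ?thesis by blast
    next
      case False
      then obtain a where az: "t = (N + 2 - tx, a, 1)" "N + 2 - tx + 1 \<le> a" "a \<le> N + 2 - ty" using t by blast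
      define i where "i = N + 2 - a"
      have "(i, N + 1) \<in> Vset N tx ty m" using az assms unfolding Vset_def i_def by auto
      moreover have "t = labc N tx ty (i, N + 1)" using az assms unfolding labc_def i_def by auto
      ultimately show ?thesis by blast
    qed
  qed
qed



lemma dec_up: "dec_from n w I \<Longrightarrow> I \<le> J \<Longrightarrow> dec_from n w J"
  unfolding dec_from_def by force
lemma no123_up: "no123_from n w I \<Longrightarrow> I \<le> J \<Longrightarrow> no123_from n w J"
  unfolding no123_from_def by force
lemma dec_top: "dec_from n w (int n + 1)"
  unfolding dec_from_def by auto

lemma thresholds:
  "\<exists>tx ty. 1 \<le> ty \<and> ty \<le> tx \<and> tx \<le> int n + 1
     \<and> (\<forall>I. 1 \<le> I \<longrightarrow> I \<le> int n + 1 \<longrightarrow> (dec_from n w I \<longleftrightarrow> tx \<le> I))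
     \<and> (\<forall>I. 1 \<le> I \<longrightarrow> I \<le> int n + 1 \<longrightarrow> (no123_from n w I \<longleftrightarrow> ty \<le> I))"
proof -
  obtain tx where tx: "1 \<le> tx" "tx \<le> int n + 1" "\<forall>I. 1 \<le> I \<longrightarrow> I \<le> int n + 1 \<longrightarrow> (dec_from n w I \<longleftrightarrow> tx \<le> I)"
    using thr_exists[of "int n + 1" "dec_from n w"] dec_up dec_top by force
  obtain ty where ty: "1 \<le> ty" "ty \<le> int n + 1" "\<forall>I. 1 \<le> I \<longrightarrow> I \<le> int n + 1 \<longrightarrow> (no123_from n w I \<longleftrightarrow> ty \<le> I)"
    using thr_exists[of "int n + 1" "no123_from n w"] no123_up dec_no123[OF dec_top] by force
  have "dec_from n w tx" using tx by simp
  then have "no123_from n w tx" by (rule dec_no123)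
  then have "ty \<le> tx" using ty tx by simp
  then show ?thesis using tx ty by blast
qed

lemma lab_eq:
  assumes "1 \<le> ty" "ty \<le> tx" "tx \<le> int n + 1"
     "\<forall>I. 1 \<le> I \<longrightarrow> I \<le> int n + 1 \<longrightarrow> (dec_from n w I \<longleftrightarrow> tx \<le> I)"
     "\<forall>I. 1 \<le> I \<longrightarrow> I \<le> int n + 1 \<longrightarrow> (no123_from n w I \<longleftrightarrow> ty \<le> I)"
  shows "lab n w = (int n + 2 - tx, int n + 2 - ty, int n + 1 - max_neg n w)"
proof -
  have "int (card {i \<in> {1..int n + 1}. dec_from n w i}) = int n + 1 + 1 - tx"
    by (rule card_thr) (use assms in auto)
  moreover have "int (card {i \<in> {1..int n + 1}. no123_from n w i}) = int n + 1 + 1 - ty"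
    by (rule card_thr) (use assms in auto)
  ultimately show ?thesis unfolding lab_def by simp
qed

context insn begin

lemma child_lab:
  assumes vc: VC and th: "1 \<le> ty" "ty \<le> tx" "tx \<le> int n + 1"
     "\<forall>I. 1 \<le> I \<longrightarrow> I \<le> int n + 1 \<longrightarrow> (dec_from n w I \<longleftrightarrow> tx \<le> I)"
     "\<forall>I. 1 \<le> I \<longrightarrow> I \<le> int n + 1 \<longrightarrow> (no123_from n w I \<longleftrightarrow> ty \<le> I)"
  shows "lab (Suc n) W = labc (int n) tx ty (i, l)"
proof -
  have tyi: "ty \<le> i"
    using VC_no123[OF vc] th(5) i1 i2 by simp
  define X' where "X' = (if i = int n + 1 then int n + 3 - tx else if tx \<le> i then int n + 2 - i else int n + 2 - tx)"
  define Y' where "Y' = (if tx \<le> i then int n + 3 - ty else int n + 2 - i)"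
  define tX where "tX = (if i = int n + 1 then tx else if tx \<le> i then i + 1 else tx + 1)"
  define tY where "tY = (if tx \<le> i then ty else i + 1)"
  have decc: "dec_from (Suc n) W I \<longleftrightarrow> tX \<le> I" if "1 \<le> I" "I \<le> int (Suc n) + 1" for I
  proof (cases "i < I")
    case True
    then have "dec_from (Suc n) W I \<longleftrightarrow> dec_from n w (I - 1)" by (rule dec_gt)
    also have "\<dots> \<longleftrightarrow> tx \<le> I - 1" using th(4) that True i1 by simp
    finally show ?thesis using True th i2 unfolding tX_def by auto
  next
    case False
    then have "dec_from (Suc n) W I \<longleftrightarrow> (i = int n + 1 \<and> dec_from n w I)" using dec_le that by simp
    also have "\<dots> \<longleftrightarrow> (i = int n + 1 \<and> tx \<le> I)" using th(4) that False i2 by auto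
    finally show ?thesis using False th i2 unfolding tX_def by auto
  qed
  have noc: "no123_from (Suc n) W I \<longleftrightarrow> tY \<le> I" if "1 \<le> I" "I \<le> int (Suc n) + 1" for I
  proof (cases "i < I")
    case True
    then have "no123_from (Suc n) W I \<longleftrightarrow> no123_from n w (I - 1)" by (rule no123_gt)
    also have "\<dots> \<longleftrightarrow> ty \<le> I - 1" using th(5) that True i1 by simp
    finally show ?thesis using True th tyi unfolding tY_def by auto
  next
    case False
    then have "no123_from (Suc n) W I \<longleftrightarrow> (no123_from n w I \<and> dec_from n w i)" using no123_le that by simp
    also have "\<dots> \<longleftrightarrow> (ty \<le> I \<and> tx \<le> i)" using th(4,5) that False i1 i2 by auto
    finally show ?thesis using False th unfolding tY_def by auto
  qed
  have "int (card {I \<in> {1..int (Suc n) + 1}. dec_from (Suc n) W I}) = int (Suc n) + 1 + 1 - tX"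
    by (rule card_thr) (use decc th i1 i2 in \<open>auto simp: tX_def\<close>)
  moreover have "int (card {I \<in> {1..int (Suc n) + 1}. no123_from (Suc n) W I}) = int (Suc n) + 1 + 1 - tY"
    by (rule card_thr) (use noc th i1 i2 tyi in \<open>auto simp: tY_def\<close>)
  ultimately show ?thesis unfolding lab_def labc_def W_mn tX_def tY_def by auto
qed

end


lemma fst_ins: "fst (ins_perm n w i l) = Suc n" by (simp add: ins_perm_def)

lemma node_step:
  assumes inB: "in_Bj1234 j n w" and inv: "Inv n w"
  shows "(\<forall>c\<in>BT_children j (n, w). in_Bj1234 j (fst c) (snd c) \<and> Inv (fst c) (snd c))
       \<and> inj_on (\<lambda>v. lab (fst v) (snd v)) (BT_children j (n, w))
       \<and> (\<lambda>v. lab (fst v) (snd v)) ` BT_children j (n, w) = suc_lab (lab n w)"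
proof -
  interpret node j n w using inB inv by unfold_locales
  obtain tx ty where th: "1 \<le> ty" "ty \<le> tx" "tx \<le> int n + 1"
     "\<forall>I. 1 \<le> I \<longrightarrow> I \<le> int n + 1 \<longrightarrow> (dec_from n w I \<longleftrightarrow> tx \<le> I)"
     "\<forall>I. 1 \<le> I \<longrightarrow> I \<le> int n + 1 \<longrightarrow> (no123_from n w I \<longleftrightarrow> ty \<le> I)"
    using thresholds[of n w] by blast
  define m where "m = max_neg n w"
  have m: "0 \<le> m" "m \<le> int n" using mn_nonneg mn_le[OF sp] by (simp_all add: m_def)
  define V where "V = Vset (int n) tx ty m"
  define ins where "ins = (\<lambda>(i, l). ins_perm n w i l)"
  have key: "(avoids_1234 (Suc n) (snd (ins_perm n w i l)) \<longleftrightarrow> (i, l) \<in> V)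
     \<and> ((i, l) \<in> V \<longrightarrow> in_Bj1234 j (Suc n) (snd (ins_perm n w i l)) \<and> Inv (Suc n) (snd (ins_perm n w i l))
          \<and> lab (Suc n) (snd (ins_perm n w i l)) = labc (int n) tx ty (i, l))"
    if il: "1 \<le> i" "i \<le> int n + 1" "m < l" "l \<le> int n + 1" for i l
  proof -
    interpret insn j n w i l using il by unfold_locales (simp_all add: m_def)
    have "VC \<longleftrightarrow> (i, l) \<in> V" using th il unfolding VC_def V_def Vset_def by auto
    then show ?thesis using avoids_iff child_inB W_Inv child_lab[OF _ th] unfolding W_def by blast
  qed
  have ch: "BT_children j (n, w) = ins ` V"
  proof (intro equalityI subsetI)
    fix c assume "c \<in> BT_children j (n, w)"
    then obtain i l where c: "c = ins_perm n w i l" "1 \<le> i" "i \<le> int n + 1" "m < l" "l \<le> int n + 1"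
      "avoids_1234 (Suc n) (snd (ins_perm n w i l))"
      using inB unfolding BT_children_def m_def by auto
    then have "(i, l) \<in> V" using key by blast
    then show "c \<in> ins ` V" using c unfolding ins_def by force
  next
    fix c assume "c \<in> ins ` V"
    then obtain i l where c: "c = ins_perm n w i l" "(i, l) \<in> V" unfolding ins_def by auto
    then have il: "1 \<le> i" "i \<le> int n + 1" "m < l" "l \<le> int n + 1" unfolding V_def Vset_def by auto
    then have "avoids_1234 (Suc n) (snd (ins_perm n w i l))" using key c by blast
    then show "c \<in> BT_children j (n, w)" using inB il c unfolding BT_children_def m_def by auto
  qed
  have phi: "lab (fst (ins p)) (snd (ins p)) = labc (int n) tx ty p" if "p \<in> V" for p
  proof -
    obtain i l where p: "p = (i, l)" by (cases p)
    have il: "1 \<le> i" "i \<le> int n + 1" "m < l" "l \<le> int n + 1" using that p unfolding V_def Vset_def by auto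
    show ?thesis using key[OF il] that p fst_ins unfolding ins_def by simp
  qed
  have P: "in_Bj1234 j (fst (ins p)) (snd (ins p)) \<and> Inv (fst (ins p)) (snd (ins p))" if "p \<in> V" for p
  proof -
    obtain i l where p: "p = (i, l)" by (cases p)
    have il: "1 \<le> i" "i \<le> int n + 1" "m < l" "l \<le> int n + 1" using that p unfolding V_def Vset_def by auto
    show ?thesis using key[OF il] that p fst_ins unfolding ins_def by simp
  qed
  have img1: "(\<lambda>v. lab (fst v) (snd v)) ` BT_children j (n, w) = labc (int n) tx ty ` V"
    unfolding ch image_image using phi by (auto intro!: image_cong)
  have labnw: "lab n w = (int n + 2 - tx, int n + 2 - ty, int n + 1 - m)"
    using lab_eq[OF th] by (simp add: m_def)
  have sl: "suc_lab (lab n w) = suc_aux (int n + 2 - tx) (int n + 2 - ty) (nat (int n + 1 - m))"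
    unfolding labnw suc_lab_def using m by simp
  have inj1: "inj_on ((\<lambda>v. lab (fst v) (snd v)) \<circ> ins) V"
    using labc_inj[OF th(1-3), of m] phi unfolding V_def[symmetric]
    by (simp add: inj_on_def)
  show ?thesis
  proof (intro conjI)
    show "\<forall>c\<in>BT_children j (n, w). in_Bj1234 j (fst c) (snd c) \<and> Inv (fst c) (snd c)"
      unfolding ch using P by blast
    show "inj_on (\<lambda>v. lab (fst v) (snd v)) (BT_children j (n, w))"
      unfolding ch by (rule inj_on_imageI[OF inj1])
    show "(\<lambda>v. lab (fst v) (snd v)) ` BT_children j (n, w) = suc_lab (lab n w)"
      unfolding img1 sl V_def using labc_img[OF th(1-3) m] by simp
  qed
qed



definition wr :: "nat \<Rightarrow> int \<Rightarrow> int" where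
  "wr j = snd (BT_root j)"

lemma wr_eq: "wr j x = (if - int j \<le> x \<and> x < 0 then - (int j + 1) - x
                      else if 0 < x \<and> x \<le> int j then int j + 1 - x else x)"
  by (simp add: wr_def BT_root_def)

lemma root_sp: "signed_perm j (wr j)"
proof -
  have into: "wr j ` sdom j \<subseteq> sdom j" by (auto simp: wr_eq sdom_iff)
  have invo: "x \<in> sdom j \<Longrightarrow> wr j (wr j x) = x" for x by (auto simp: wr_eq sdom_iff)
  have inj: "inj_on (wr j) (sdom j)" by (rule inj_onI) (metis invo)
  have "wr j ` sdom j = sdom j" by (rule endo_inj_surj[OF finite_sdom into inj])
  moreover have "\<forall>x. wr j (- x) = - wr j x" by (auto simp: wr_eq)
  moreover have "\<forall>x. x \<notin> sdom j \<longrightarrow> wr j x = x" by (auto simp: wr_eq sdom_iff)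
  ultimately show ?thesis unfolding signed_perm_def bij_betw_def using inj by blast
qed

lemma root_av: "avoids_1234 j (wr j)"
  unfolding avoids_1234_def
proof (intro notI, elim exE conjE)
  fix a b c d assume h: "a \<in> sdom j" "b \<in> sdom j" "c \<in> sdom j" "d \<in> sdom j" "a < b" "b < c" "c < d"
    "wr j a < wr j b" "wr j b < wr j c" "wr j c < wr j d"
  show False
  proof (cases "b < 0")
    case True
    then show False using h by (auto simp: wr_eq sdom_iff split: if_splits)
  next
    case False
    then show False using h by (auto simp: wr_eq sdom_iff split: if_splits)
  qed
qed

lemma root_card: "card {i \<in> {1 .. int j}. wr j i > 0} = j"
proof -
  have "{i \<in> {1 .. int j}. wr j i > 0} = {1 .. int j}" by (auto simp: wr_eq)
  then show ?thesis by simp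
qed

lemma root_inB: "in_Bj1234 j j (wr j)"
  unfolding in_Bj1234_def using root_sp root_av root_card by simp

lemma root_Inv: "Inv j (wr j)"
  unfolding Inv_def by (auto simp: wr_eq)

lemma root_mn: "max_neg j (wr j) = 0"
  by (rule mn_eqI) (auto simp: wr_eq)

lemma root_dec: "1 \<le> I \<Longrightarrow> dec_from j (wr j) I"
  unfolding dec_from_def by (auto simp: wr_eq)

lemma root_lab: "lab j (wr j) = (int j + 1, int j + 1, int j + 1)"
proof -
  have "lab j (wr j) = (int j + 2 - 1, int j + 2 - 1, int j + 1 - max_neg j (wr j))"
    by (rule lab_eq) (auto simp: root_dec dec_no123)
  then show ?thesis using root_mn by simp
qed

theorem proposition2p7:
  fixes j :: nat
  shows "rooted_tree_iso (T_tree j) [(int j + 1, int j + 1, int j + 1)]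
                         (BT_tree j) [BT_root j]"
  unfolding T_tree_def BT_tree_def
proof (rule gen_tree_iso[where P = "\<lambda>v. in_Bj1234 j (fst v) (snd v) \<and> Inv (fst v) (snd v)"
                          and \<phi> = "\<lambda>v. lab (fst v) (snd v)"])
  have br: "BT_root j = (j, wr j)" by (simp add: wr_def BT_root_def)
  show "in_Bj1234 j (fst (BT_root j)) (snd (BT_root j)) \<and> Inv (fst (BT_root j)) (snd (BT_root j))"
    using root_inB root_Inv br by simp
  show "lab (fst (BT_root j)) (snd (BT_root j)) = (int j + 1, int j + 1, int j + 1)"
    using root_lab br by simp
next
  fix v c assume "in_Bj1234 j (fst v) (snd v) \<and> Inv (fst v) (snd v)" "c \<in> BT_children j v"
  then show "in_Bj1234 j (fst c) (snd c) \<and> Inv (fst c) (snd c)"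
    using node_step[of j "fst v" "snd v"] by simp
next
  fix v assume "in_Bj1234 j (fst v) (snd v) \<and> Inv (fst v) (snd v)"
  then show "inj_on (\<lambda>v. lab (fst v) (snd v)) (BT_children j v)"
    using node_step[of j "fst v" "snd v"] by simp
next
  fix v assume "in_Bj1234 j (fst v) (snd v) \<and> Inv (fst v) (snd v)"
  then show "(\<lambda>v. lab (fst v) (snd v)) ` BT_children j v = suc_lab (lab (fst v) (snd v))"
    using node_step[of j "fst v" "snd v"] by simp
qed


end
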